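(* With splitting parameter $\gamma=2$ and fixed $N$ and $h=L/N$, the coefficients of the two-dimensional scheme satisfy $$\lim_{\alpha\to2^-}c_{2,\alpha}a_{10}=\lim_{\alpha\to2^-}c_{2,\alpha}a_{01}=\frac1{h^2},\qquad \lim_{\alpha\to2^-}c_{2,\alpha}a_{mn}=0\ \text{ for } m,n\ge0,\ m+n>1,\qquad \lim_{\alpha\to2^-}c_{2,\alpha}a_{00}=-\frac4{h^2}.$$ Moreover $\lim_{\alpha\to2^-}c_{2,\alpha}\int_{I_{00}}|\boldsymbol{\xi}|^{-\alpha}d\boldsymbol{\xi}=1$ and $\lim_{\alpha\to2^-}c_{2,\alpha}=0$. Consequently, the scheme reduces in this limit to the five-point central difference scheme for $-\Delta$.
   Context: $c_{2,\alpha}=\frac{2^{\alpha-1}\alpha\,\Gamma((2+\alpha)/2)}{\pi\,\Gamma(1-\alpha/2)}$. Let $L>0$, $N$ a positive integer, $h=L/N$, $\boldsymbol{\xi}_{mn}=(mh,nh)$, $I_{ij}=[ih,(i+1)h]\times[jh,(j+1)h]$, $D_1=(0,L)^2$, $D_2=[0,\infty)^2\setminus D_1$, and $T_{mn}=\big(I_{(m-1)(n-1)}\cup I_{(m-1)n}\cup I_{m(n-1)}\cup I_{mn}\big)\cap D_1$ (cells with negative index being empty). For $m,n\ge0$, $m+n>0$, with $\sigma(m,n)$ the number of zeros among $m,n$, $\bar c_{10}=\bar c_{01}=1$, $\bar c_{11}=-1$, $\bar c_{mn}=0$ otherwise, the coefficients are (for $\gamma=2$) $$a_{mn}=\frac{2^{\sigma(m,n)}}{4|\boldsymbol{\xi}_{mn}|^{2}}\Big(\int_{T_{mn}}|\boldsymbol{\xi}|^{-\alpha}d\boldsymbol{\xi}+\bar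 c_{mn}\int_{I_{00}}|\boldsymbol{\xi}|^{-\alpha}d\boldsymbol{\xi}\Big),$$ and $a_{00}=-2\sum_{m=1}^N(a_{m0}+a_{0m})-4\sum_{m,n=1}^Na_{mn}-4\int_{D_2}|\boldsymbol{\xi}|^{-(2+\alpha)}d\boldsymbol{\xi}$. The scheme is $(-\Delta)^{\alpha/2}_{h,2}u_{ij}=-c_{2,\alpha}\sum a_{|m||n|}u_{(i+m)(j+n)}$, summed over grid offsets $(m,n)$ with $(i+m,j+n)$ an interior grid index. *)

theory Defs
  imports "HOL-Analysis.Analysis"
begin

definition c2 :: "real \<Rightarrow> real" where
  "c2 \<alpha> = 2 powr (\<alpha> - 1) * \<alpha> * Gamma ((2 + \<alpha>) / 2) / (pi * Gamma (1 - \<alpha> / 2))"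

definition cell :: "real \<Rightarrow> int \<Rightarrow> int \<Rightarrow> (real \<times> real) set" where
  "cell h i j = (if i < 0 \<or> j < 0 then {}
     else {of_int i * h .. (of_int i + 1) * h} \<times> {of_int j * h .. (of_int j + 1) * h})"

definition D1 :: "real \<Rightarrow> (real \<times> real) set" where
  "D1 L = {0<..<L} \<times> {0<..<L}"

definition D2 :: "real \<Rightarrow> (real \<times> real) set" where
  "D2 L = ({0..} \<times> {0..}) - D1 L"

definition Tcell :: "real \<Rightarrow> real \<Rightarrow> nat \<Rightarrow> nat \<Rightarrow> (real \<times> real) set" where
  "Tcell L h m n = (cell h (int m - 1) (int n - 1) \<union> cell h (int m - 1) (int n)
      \<union> cell h (int m) (int n - 1) \<union> cell h (int m) (int n)) \<inter> D1 L"

definition sigma_zeros :: "nat \<Rightarrow> nat \<Rightarrow> nat" where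
  "sigma_zeros m n = (if m = 0 then 1 else 0) + (if n = 0 then 1 else 0)"

definition cbar :: "nat \<Rightarrow> nat \<Rightarrow> real" where
  "cbar m n = (if (m, n) = (1, 0) \<or> (m, n) = (0, 1) then 1
               else if (m, n) = (1, 1) then -1 else 0)"

definition Kint :: "real \<Rightarrow> (real \<times> real) set \<Rightarrow> real" where
  "Kint \<alpha> S = (LINT \<xi>:S|lborel. norm \<xi> powr (-\<alpha>))"

text \<open>Coefficients a_{mn} (m+n>0) for gamma = 2, with h = L/N.\<close>
definition acoef :: "real \<Rightarrow> real \<Rightarrow> nat \<Rightarrow> nat \<Rightarrow> nat \<Rightarrow> real" where
  "acoef \<alpha> L N m n =
     (let h = L / real N in
      2 ^ sigma_zeros m n / (4 * ((real m * h)\<^sup>2 + (real n * h)\<^sup>2))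
        * (Kint \<alpha> (Tcell L h m n) + cbar m n * Kint \<alpha> (cell h 0 0)))"

definition a00 :: "real \<Rightarrow> real \<Rightarrow> nat \<Rightarrow> real" where
  "a00 \<alpha> L N =
     - 2 * (\<Sum>m=1..N. acoef \<alpha> L N m 0 + acoef \<alpha> L N 0 m)
     - 4 * (\<Sum>m=1..N. \<Sum>n=1..N. acoef \<alpha> L N m n)
     - 4 * (LINT \<xi>:D2 L|lborel. norm \<xi> powr (-(2 + \<alpha>)))"

definition acoeff :: "real \<Rightarrow> real \<Rightarrow> nat \<Rightarrow> nat \<Rightarrow> nat \<Rightarrow> real" where
  "acoeff \<alpha> L N m n = (if m = 0 \<and> n = 0 then a00 \<alpha> L N else acoef \<alpha> L N m n)"

definition grid_interior :: "nat \<Rightarrow> (int \<times> int) set" where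
  "grid_interior N = {1 .. int N - 1} \<times> {1 .. int N - 1}"

definition scheme :: "real \<Rightarrow> real \<Rightarrow> nat \<Rightarrow> (int \<Rightarrow> int \<Rightarrow> real) \<Rightarrow> int \<Rightarrow> int \<Rightarrow> real" where
  "scheme \<alpha> L N u i j =
     - c2 \<alpha> * (\<Sum>(p, q)\<in>grid_interior N.
         acoeff \<alpha> L N (nat \<bar>p - i\<bar>) (nat \<bar>q - j\<bar>) * u p q)"

end

theory Submission
  imports Defs
begin


definition g2 :: "real \<Rightarrow> real" where
  "g2 \<alpha> = 2 powr (\<alpha> - 1) * \<alpha> * Gamma ((2 + \<alpha>) / 2) / (2 * pi * Gamma (2 - \<alpha> / 2))"

lemma c2_eq: assumes "\<alpha> < 2" shows "c2 \<alpha> = (2 - \<alpha>) * g2 \<alpha>"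
proof -
  have nz: "1 - \<alpha>/2 \<notin> \<int>\<^sub>\<le>\<^sub>0" using assms
    by (auto simp: nonpos_Ints_def)
  have "Gamma (2 - \<alpha>/2) = (1 - \<alpha>/2) * Gamma (1 - \<alpha>/2)"
    using Gamma_plus1[OF nz] by (simp add: algebra_simps)
  moreover have "Gamma (1 - \<alpha>/2) > 0" using assms by simp
  ultimately show ?thesis unfolding c2_def g2_def using assms
    apply (simp only:)
    by (simp add: divide_simps)
qed

lemma g2_lim: "(g2 \<longlongrightarrow> 2 / pi) (at_left 2)"
proof -
  have "isCont g2 2" unfolding g2_def
    by (intro continuous_intros) (auto simp: nonpos_Ints_def)
  moreover have "g2 2 = 2 / pi"
    using Gamma_plus1[of 1] by (simp add: g2_def)
  ultimately show ?thesis
    by (metis continuous_at_split continuous_within)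
qed

lemma c2_lim0: "(c2 \<longlongrightarrow> 0) (at_left 2)"
proof -
  have "((\<lambda>a. (2 - a) * g2 a) \<longlongrightarrow> (2 - 2) * (2/pi)) (at_left 2)"
    by (intro tendsto_intros g2_lim)
  then have "((\<lambda>a. (2 - a) * g2 a) \<longlongrightarrow> 0) (at_left 2)" by simp
  moreover have "eventually (\<lambda>a. (2 - a) * g2 a = c2 a) (at_left 2)"
    by (auto simp: eventually_at_left_field c2_eq intro!: exI[of _ 1])
  ultimately show ?thesis using Lim_transform_eventually by blast
qed

lemma c2_pos: assumes "0 < \<alpha>" "\<alpha> < 2" shows "c2 \<alpha> > 0"
  using assms unfolding c2_def by (intro divide_pos_pos mult_pos_pos) auto



definition NI :: "real \<Rightarrow> (real \<times> real) set \<Rightarrow> ennreal" where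
  "NI \<alpha> A = (\<integral>\<^sup>+ \<xi>. ennreal (norm \<xi> powr -\<alpha>) * indicator A \<xi> \<partial>lborel)"

lemma meas_f[measurable]: "(\<lambda>\<xi>::real\<times>real. norm \<xi> powr a) \<in> borel_measurable borel"
  by measurable

lemma Kint_NI: assumes "A \<in> sets lborel" shows "Kint \<alpha> A = enn2real (NI \<alpha> A)"
proof -
  have "Kint \<alpha> A = integral\<^sup>L lborel (\<lambda>\<xi>. indicator A \<xi> *\<^sub>R norm \<xi> powr -\<alpha>)"
    unfolding Kint_def set_lebesgue_integral_def by simp
  also have "\<dots> = enn2real (\<integral>\<^sup>+ \<xi>. ennreal (indicator A \<xi> *\<^sub>R norm \<xi> powr -\<alpha>) \<partial>lborel)"
    using assms by (intro integral_eq_nn_integral) auto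
  also have "(\<integral>\<^sup>+ \<xi>. ennreal (indicator A \<xi> *\<^sub>R norm \<xi> powr -\<alpha>) \<partial>lborel) = NI \<alpha> A"
    unfolding NI_def by (intro nn_integral_cong) (auto split: split_indicator)
  finally show ?thesis .
qed

lemma inner_int:
  assumes "x > 0"
  shows "((\<lambda>y. 1 / (1 + (y/x)\<^sup>2)) has_integral x * (pi/4)) {0..x}"
proof -
  have "((\<lambda>y. 1 / (1 + (y/x)\<^sup>2)) has_integral (x * arctan (x/x) - x * arctan (0/x))) {0..x}"
  proof (rule fundamental_theorem_of_calculus)
    show "0 \<le> x" using assms by simp
    fix y assume "y \<in> {0..x}"
    have "((\<lambda>y. x * arctan (y/x)) has_real_derivative x * (1 / (1 + (y/x)\<^sup>2) * (1/x))) (at y)"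
      by (auto intro!: derivative_eq_intros simp: inverse_eq_divide)
    then show "((\<lambda>y. x * arctan (y/x)) has_vector_derivative 1 / (1 + (y/x)\<^sup>2)) (at y within {0..x})"
      using assms by (auto simp: has_real_derivative_iff_has_vector_derivative[symmetric]
          intro: has_field_derivative_at_within)
  qed
  then show ?thesis using assms by (simp add: arctan_one)
qed



definition Phi :: "real \<Rightarrow> real \<Rightarrow> ennreal" where
  "Phi \<alpha> x = (\<integral>\<^sup>+ y. ennreal (norm (x,y) powr -\<alpha>) * indicator {0..x} y \<partial>lborel)"

lemma pw_bounds:
  assumes "x > 0" "0 \<le> y" "y \<le> x" "0 \<le> \<alpha>" "\<alpha> \<le> 2"
  shows "x powr -\<alpha> * (1 / (1 + (y/x)\<^sup>2)) \<le> norm (x,y) powr -\<alpha>"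
    and "norm (x,y) powr -\<alpha> \<le> sqrt 2 powr (2-\<alpha>) * (x powr -\<alpha> * (1 / (1 + (y/x)\<^sup>2)))"
proof -
  define s where "s = sqrt (1 + (y/x)\<^sup>2)"
  have s1: "1 \<le> s" unfolding s_def by simp
  have s2: "s \<le> sqrt 2" unfolding s_def using assms
    by (simp add: power_le_one)
  have ss: "s powr -2 = 1 / (1 + (y/x)\<^sup>2)"
    unfolding s_def by (simp add: powr_minus powr_realpow inverse_eq_divide add_pos_nonneg)
  have "norm (x,y) = x * s"
  proof -
    have "x * s = sqrt (x\<^sup>2) * sqrt (1 + (y/x)\<^sup>2)" unfolding s_def using assms by simp
    also have "\<dots> = sqrt (x\<^sup>2 * (1 + (y/x)\<^sup>2))" by (simp add: real_sqrt_mult)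
    also have "x\<^sup>2 * (1 + (y/x)\<^sup>2) = x\<^sup>2 + y\<^sup>2" using assms by (simp add: field_simps)
    finally show ?thesis by (simp add: norm_Pair)
  qed
  then have n: "norm (x,y) powr -\<alpha> = x powr -\<alpha> * s powr -\<alpha>"
    using assms s1 by (simp add: powr_mult)
  have "s powr -2 \<le> s powr -\<alpha>" using s1 assms by (intro powr_mono) auto
  then show "x powr -\<alpha> * (1 / (1 + (y/x)\<^sup>2)) \<le> norm (x,y) powr -\<alpha>"
    using n ss mult_left_mono[of "1 / (1 + (y/x)\<^sup>2)" "s powr -\<alpha>" "x powr -\<alpha>"] by simp
  have "s powr -\<alpha> = s powr (2-\<alpha>) * s powr -2" by (simp add: powr_add[symmetric])
  also have "\<dots> \<le> sqrt 2 powr (2-\<alpha>) * s powr -2"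
    using s1 s2 assms by (intro mult_right_mono powr_mono2) auto
  finally show "norm (x,y) powr -\<alpha> \<le> sqrt 2 powr (2-\<alpha>) * (x powr -\<alpha> * (1 / (1 + (y/x)\<^sup>2)))"
    using n ss mult_left_mono[of "s powr -\<alpha>" "sqrt 2 powr (2-\<alpha>) * s powr -2" "x powr -\<alpha>"]
    by (simp add: mult_ac)
qed

lemma Phi_base:
  assumes "x > 0"
  shows "(\<integral>\<^sup>+ y. ennreal (x powr -\<alpha> * (1 / (1 + (y/x)\<^sup>2))) * indicator {0..x} y \<partial>lborel)
     = ennreal (x powr (1-\<alpha>) * (pi/4))"
proof -
  have "((\<lambda>y. x powr -\<alpha> * (1 / (1 + (y/x)\<^sup>2))) has_integral x powr -\<alpha> * (x * (pi/4))) {0..x}"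
    by (intro has_integral_mult_right inner_int assms)
  from nn_integral_has_integral_lebesgue'[OF _ this]
  have "(\<integral>\<^sup>+ y. ennreal (x powr -\<alpha> * (1 / (1 + (y/x)\<^sup>2))) * indicator {0..x} y \<partial>lborel)
     = ennreal (x powr -\<alpha> * (x * (pi/4)))" by (simp add: add_pos_nonneg)
  also have "x powr -\<alpha> * (x * (pi/4)) = x powr (1-\<alpha>) * (pi/4)"
    using assms by (simp add: powr_diff powr_minus field_simps)
  finally show ?thesis .
qed

lemma Phi_bounds:
  assumes "x > 0" "0 \<le> \<alpha>" "\<alpha> \<le> 2"
  shows "ennreal (x powr (1-\<alpha>) * (pi/4)) \<le> Phi \<alpha> x"
    and "Phi \<alpha> x \<le> ennreal (sqrt 2 powr (2-\<alpha>) * (x powr (1-\<alpha>) * (pi/4)))"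
proof -
  show "ennreal (x powr (1-\<alpha>) * (pi/4)) \<le> Phi \<alpha> x"
    unfolding Phi_def Phi_base[OF assms(1), symmetric]
    using pw_bounds(1)[of x _ \<alpha>] assms
    by (intro nn_integral_mono) (auto split: split_indicator)
  have "Phi \<alpha> x \<le> (\<integral>\<^sup>+ y. ennreal (sqrt 2 powr (2-\<alpha>)) * (ennreal (x powr -\<alpha> * (1 / (1 + (y/x)\<^sup>2))) * indicator {0..x} y) \<partial>lborel)"
    unfolding Phi_def
    using pw_bounds(2)[of x _ \<alpha>] assms
    by (intro nn_integral_mono)
       (auto split: split_indicator simp: ennreal_mult[symmetric] add_pos_nonneg)
  also have "\<dots> = ennreal (sqrt 2 powr (2-\<alpha>)) * (\<integral>\<^sup>+ y. ennreal (x powr -\<alpha> * (1 / (1 + (y/x)\<^sup>2))) * indicator {0..x} y \<partial>lborel)"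
    by (rule nn_integral_cmult) auto
  also have "\<dots> = ennreal (sqrt 2 powr (2-\<alpha>)) * ennreal (x powr (1-\<alpha>) * (pi/4))"
    by (simp only: Phi_base[OF assms(1)])
  also have "\<dots> = ennreal (sqrt 2 powr (2-\<alpha>) * (x powr (1-\<alpha>) * (pi/4)))"
    by (rule ennreal_mult[symmetric]) auto
  finally show "Phi \<alpha> x \<le> ennreal (sqrt 2 powr (2-\<alpha>) * (x powr (1-\<alpha>) * (pi/4)))" .
qed



definition E :: "real \<Rightarrow> real \<Rightarrow> ennreal" where
  "E \<alpha> h = (\<integral>\<^sup>+ x. Phi \<alpha> x * indicator {0..h} x \<partial>lborel)"

lemma powr_nn:
  assumes "0 \<le> h" "\<alpha> < 2" and that: "c \<ge> 0"
  shows "(\<integral>\<^sup>+ x. ennreal (c * x powr (1-\<alpha>)) * indicator {0..h} x \<partial>lborel)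
         = ennreal (c * (h powr (2-\<alpha>) / (2-\<alpha>)))"
proof -
  have "((\<lambda>x. x powr (1-\<alpha>)) has_integral (h powr (1-\<alpha>+1) / (1-\<alpha>+1))) {0..h}"
    using assms by (intro has_integral_powr_from_0) auto
  then have "((\<lambda>x. c * x powr (1-\<alpha>)) has_integral c * (h powr (2-\<alpha>) / (2-\<alpha>))) {0..h}"
    by (intro has_integral_mult_right) (simp add: algebra_simps)
  from nn_integral_has_integral_lebesgue'[OF _ this] that show ?thesis by simp
qed

lemma E_bounds:
  assumes "0 \<le> h" "0 \<le> \<alpha>" "\<alpha> < 2"
  shows "ennreal (pi/4 * (h powr (2-\<alpha>) / (2-\<alpha>))) \<le> E \<alpha> h"
    and "E \<alpha> h \<le> ennreal (sqrt 2 powr (2-\<alpha>) * (pi/4) * (h powr (2-\<alpha>) / (2-\<alpha>)))"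
proof -
  have ae: "AE x in lborel. x \<noteq> 0" by (rule AE_lborel_singleton)
  have "ennreal (pi/4 * (h powr (2-\<alpha>) / (2-\<alpha>)))
      = (\<integral>\<^sup>+ x. ennreal (pi/4 * x powr (1-\<alpha>)) * indicator {0..h} x \<partial>lborel)"
    by (rule powr_nn[OF assms(1,3), symmetric]) simp
  also have "\<dots> \<le> E \<alpha> h"
    unfolding E_def
  proof (intro nn_integral_mono_AE)
    show "AE x in lborel. ennreal (pi/4 * x powr (1-\<alpha>)) * indicator {0..h} x \<le> Phi \<alpha> x * indicator {0..h} x"
    using ae proof eventually_elim
    case (elim x)
    show ?case
    proof (cases "x \<in> {0..h}")
      case True
      then have "x > 0" using elim by auto
      from Phi_bounds(1)[OF this assms(2)] assms True show ?thesis by (simp add: mult.commute)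
    qed simp
  qed
  qed
  finally show "ennreal (pi/4 * (h powr (2-\<alpha>) / (2-\<alpha>))) \<le> E \<alpha> h" .
  have "E \<alpha> h \<le> (\<integral>\<^sup>+ x. ennreal ((sqrt 2 powr (2-\<alpha>) * (pi/4)) * x powr (1-\<alpha>)) * indicator {0..h} x \<partial>lborel)"
    unfolding E_def
  proof (intro nn_integral_mono_AE)
    show "AE x in lborel. Phi \<alpha> x * indicator {0..h} x \<le> ennreal ((sqrt 2 powr (2-\<alpha>) * (pi/4)) * x powr (1-\<alpha>)) * indicator {0..h} x"
    using ae proof eventually_elim
    case (elim x)
    show ?case
    proof (cases "x \<in> {0..h}")
      case True
      then have "x > 0" using elim by auto
      from Phi_bounds(2)[OF this assms(2)] assms True show ?thesis by (simp add: mult_ac)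
    qed simp
  qed
  qed
  also have "\<dots> = ennreal (sqrt 2 powr (2-\<alpha>) * (pi/4) * (h powr (2-\<alpha>) / (2-\<alpha>)))"
    by (rule powr_nn[OF assms(1,3)]) simp
  finally show "E \<alpha> h \<le> ennreal (sqrt 2 powr (2-\<alpha>) * (pi/4) * (h powr (2-\<alpha>) / (2-\<alpha>)))" .
qed

lemma tonelli1:
  fixes F :: "real \<times> real \<Rightarrow> ennreal"
  assumes "F \<in> borel_measurable borel"
  shows "(\<integral>\<^sup>+ \<xi>. F \<xi> \<partial>lborel) = (\<integral>\<^sup>+ x. \<integral>\<^sup>+ y. F (x,y) \<partial>lborel \<partial>lborel)"
proof -
  have "F \<in> borel_measurable (lborel \<Otimes>\<^sub>M lborel)" using assms by (simp add: lborel_prod)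
  from lborel.nn_integral_fst[OF this] show ?thesis by (simp add: lborel_prod)
qed

lemma tonelli2:
  fixes F :: "real \<times> real \<Rightarrow> ennreal"
  assumes "F \<in> borel_measurable borel"
  shows "(\<integral>\<^sup>+ \<xi>. F \<xi> \<partial>lborel) = (\<integral>\<^sup>+ y. \<integral>\<^sup>+ x. F (x,y) \<partial>lborel \<partial>lborel)"
proof -
  have "F \<in> borel_measurable (lborel \<Otimes>\<^sub>M lborel)" using assms by (simp add: lborel_prod)
  from lborel_pair.nn_integral_snd[OF this] show ?thesis by (simp add: lborel_prod)
qed

lemma NI_sq:
  assumes "0 \<le> h"
  shows "NI \<alpha> ({0..h} \<times> {0..h}) = 2 * E \<alpha> h"
proof -
  define Lo where "Lo = {p::real\<times>real. 0 \<le> snd p \<and> snd p \<le> fst p \<and> fst p \<le> h}"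
  define Up where "Up = {p::real\<times>real. 0 \<le> fst p \<and> fst p < snd p \<and> snd p \<le> h}"
  have "Lo \<in> sets borel" unfolding Lo_def
    by (rule borel_closed) (intro closed_Collect_conj closed_Collect_le continuous_intros)
  moreover have eqU: "Up = {p::real\<times>real. 0 \<le> fst p \<and> snd p \<le> h} \<inter> {p. fst p < snd p}"
    unfolding Up_def by auto
  have "Up \<in> sets borel" unfolding eqU
    by (intro sets.Int borel_closed borel_open closed_Collect_conj closed_Collect_le open_Collect_less continuous_intros)
  ultimately have [measurable]: "Lo \<in> sets borel" "Up \<in> sets borel" by auto
  have "NI \<alpha> ({0..h} \<times> {0..h}) = (\<integral>\<^sup>+ \<xi>. ennreal (norm \<xi> powr -\<alpha>) * indicator Lo \<xi> + ennreal (norm \<xi> powr -\<alpha>) * indicator Up \<xi> \<partial>lborel)"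
    unfolding NI_def
    by (intro nn_integral_cong) (auto simp: Lo_def Up_def split: split_indicator)
  also have "\<dots> = (\<integral>\<^sup>+ \<xi>. ennreal (norm \<xi> powr -\<alpha>) * indicator Lo \<xi> \<partial>lborel) + (\<integral>\<^sup>+ \<xi>. ennreal (norm \<xi> powr -\<alpha>) * indicator Up \<xi> \<partial>lborel)"
    by (intro nn_integral_add) auto
  also have "(\<integral>\<^sup>+ \<xi>. ennreal (norm \<xi> powr -\<alpha>) * indicator Lo \<xi> \<partial>lborel) = E \<alpha> h"
  proof -
    have "(\<integral>\<^sup>+ \<xi>. ennreal (norm \<xi> powr -\<alpha>) * indicator Lo \<xi> \<partial>lborel)
        = (\<integral>\<^sup>+ x. \<integral>\<^sup>+ y. ennreal (norm (x,y) powr -\<alpha>) * indicator Lo (x,y) \<partial>lborel \<partial>lborel)"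
      by (rule tonelli1) auto
    also have "\<dots> = (\<integral>\<^sup>+ x. Phi \<alpha> x * indicator {0..h} x \<partial>lborel)"
    proof (intro nn_integral_cong)
      fix x :: real
      have "(\<integral>\<^sup>+ y. ennreal (norm (x,y) powr -\<alpha>) * indicator Lo (x,y) \<partial>lborel)
          = (\<integral>\<^sup>+ y. ennreal (norm (x,y) powr -\<alpha>) * indicator {0..x} y * indicator {0..h} x \<partial>lborel)"
        by (intro nn_integral_cong) (auto simp: Lo_def split: split_indicator)
      also have "\<dots> = Phi \<alpha> x * indicator {0..h} x"
        unfolding Phi_def by (rule nn_integral_multc) measurable
      finally show "(\<integral>\<^sup>+ y. ennreal (norm (x,y) powr -\<alpha>) * indicator Lo (x,y) \<partial>lborel) = Phi \<alpha> x * indicator {0..h} x" .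
    qed
    finally show ?thesis unfolding E_def .
  qed
  also have "(\<integral>\<^sup>+ \<xi>. ennreal (norm \<xi> powr -\<alpha>) * indicator Up \<xi> \<partial>lborel) = E \<alpha> h"
  proof -
    have "(\<integral>\<^sup>+ \<xi>. ennreal (norm \<xi> powr -\<alpha>) * indicator Up \<xi> \<partial>lborel)
        = (\<integral>\<^sup>+ y. \<integral>\<^sup>+ x. ennreal (norm (x,y) powr -\<alpha>) * indicator Up (x,y) \<partial>lborel \<partial>lborel)"
      by (rule tonelli2) auto
    also have "\<dots> = (\<integral>\<^sup>+ y. Phi \<alpha> y * indicator {0..h} y \<partial>lborel)"
    proof (intro nn_integral_cong)
      fix y :: real
      have "(\<integral>\<^sup>+ x. ennreal (norm (x,y) powr -\<alpha>) * indicator Up (x,y) \<partial>lborel)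
          = (\<integral>\<^sup>+ x. ennreal (norm (y,x) powr -\<alpha>) * indicator {0..y} x * indicator {0..h} y \<partial>lborel)"
        using AE_lborel_singleton[of y]
        by (intro nn_integral_cong_AE, eventually_elim)
           (auto simp: Up_def norm_Pair add.commute split: split_indicator)
      also have "\<dots> = Phi \<alpha> y * indicator {0..h} y"
        unfolding Phi_def by (rule nn_integral_multc) measurable
      finally show "(\<integral>\<^sup>+ x. ennreal (norm (x,y) powr -\<alpha>) * indicator Up (x,y) \<partial>lborel) = Phi \<alpha> y * indicator {0..h} y" .
    qed
    finally show ?thesis unfolding E_def .
  qed
  finally show ?thesis by (simp add: mult_2)
qed



lemma line_null1: "{a::real} \<times> (UNIV::real set) \<in> null_sets lborel"
proof -
  have "{a} \<times> (UNIV::real set) \<in> null_sets (lborel \<Otimes>\<^sub>M lborel)"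
    by (intro lborel.times_in_null_sets1) auto
  then show ?thesis by (simp add: lborel_prod)
qed

lemma line_null2: "(UNIV::real set) \<times> {a::real} \<in> null_sets lborel"
proof -
  have "(UNIV::real set) \<times> {a} \<in> null_sets (lborel \<Otimes>\<^sub>M lborel)"
    by (intro lborel.times_in_null_sets2) auto
  then show ?thesis by (simp add: lborel_prod)
qed

lemma NI_between:
  assumes "0 \<le> h" "A \<in> sets lborel"
    and "{0<..<h} \<times> {0<..<h} \<subseteq> A" "A \<subseteq> {0..h} \<times> {0..h}"
  shows "NI \<alpha> A = 2 * E \<alpha> h"
proof -
  have "NI \<alpha> A \<le> NI \<alpha> ({0..h} \<times> {0..h})"
    unfolding NI_def using assms(4)
    by (intro nn_integral_mono) (auto split: split_indicator)
  moreover have "NI \<alpha> ({0..h} \<times> {0..h}) \<le> NI \<alpha> A"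
    unfolding NI_def
  proof (intro nn_integral_mono_AE)
    let ?N = "({0} \<times> UNIV \<union> {h} \<times> UNIV) \<union> (UNIV \<times> {0} \<union> UNIV \<times> {h}) :: (real\<times>real) set"
    have "?N \<in> null_sets lborel"
      by (intro null_sets.Un line_null1 line_null2)
    then show "AE \<xi> in lborel. ennreal (norm \<xi> powr - \<alpha>) * indicator ({0..h} \<times> {0..h}) \<xi>
        \<le> ennreal (norm \<xi> powr - \<alpha>) * indicator A \<xi>"
    proof (rule AE_I')
      show "{\<xi> \<in> space lborel. \<not> ennreal (norm \<xi> powr - \<alpha>) * indicator ({0..h} \<times> {0..h}) \<xi>
        \<le> ennreal (norm \<xi> powr - \<alpha>) * indicator A \<xi>} \<subseteq> ?N"
      proof
        fix \<xi> assume "\<xi> \<in> {\<xi> \<in> space lborel. \<not> ennreal (norm \<xi> powr - \<alpha>) * indicator ({0..h} \<times> {0..h}) \<xi>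
          \<le> ennreal (norm \<xi> powr - \<alpha>) * indicator A \<xi>}"
        then have "\<xi> \<in> {0..h} \<times> {0..h}" "\<xi> \<notin> A"
          by (cases "\<xi> \<in> {0..h} \<times> {0..h}"; cases "\<xi> \<in> A"; simp)+
        then have "\<xi> \<notin> {0<..<h} \<times> {0<..<h}" using assms(3) by auto
        with \<open>\<xi> \<in> {0..h} \<times> {0..h}\<close> show "\<xi> \<in> ?N" by (cases \<xi>) auto
      qed
    qed
  qed
  ultimately show ?thesis using NI_sq[OF assms(1)] by simp
qed

lemma ennreal_2: "0 \<le> y \<Longrightarrow> ennreal (2 * y) = 2 * ennreal y"
  by (simp add: ennreal_mult)

lemma Kint_between0:
  assumes "0 < h" "A \<in> sets lborel" "0 \<le> \<alpha>" "\<alpha> < 2"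
    and "{0<..<h} \<times> {0<..<h} \<subseteq> A" "A \<subseteq> {0..h} \<times> {0..h}"
    and H: "H = h powr (2-\<alpha>) / (2-\<alpha>)" and S: "S = sqrt 2 powr (2-\<alpha>)"
  shows "2 * (pi/4 * H) \<le> Kint \<alpha> A"
    and "Kint \<alpha> A \<le> 2 * (S * (pi/4) * H)"
proof -
  have H0: "H \<ge> 0" "S \<ge> 0" using H S assms by auto
  have K: "Kint \<alpha> A = enn2real (2 * E \<alpha> h)"
    using Kint_NI[OF assms(2)] NI_between[OF _ assms(2,5,6)] assms(1) by simp
  have Eb1: "ennreal (pi/4 * H) \<le> E \<alpha> h" and Eb2: "E \<alpha> h \<le> ennreal (S * (pi/4) * H)"
    using E_bounds[of h \<alpha>] assms unfolding H[symmetric] S[symmetric] by auto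
  have e2: "ennreal (2 * (S * (pi/4) * H)) = 2 * ennreal (S * (pi/4) * H)"
    by (rule ennreal_2) (use H0 in simp)
  have e1: "ennreal (2 * (pi/4 * H)) = 2 * ennreal (pi/4 * H)"
    by (rule ennreal_2) (use H0 in simp)
  have up: "2 * E \<alpha> h \<le> ennreal (2 * (S * (pi/4) * H))"
    unfolding e2 using Eb2 by (intro mult_left_mono) auto
  have lo: "ennreal (2 * (pi/4 * H)) \<le> 2 * E \<alpha> h"
    unfolding e1 using Eb1 by (intro mult_left_mono) auto
  have fin: "2 * E \<alpha> h < top" using up by (simp add: le_less_trans)
  show "2 * (pi/4 * H) \<le> Kint \<alpha> A"
    unfolding K using enn2real_mono[OF lo fin] H0 by simp
  show "Kint \<alpha> A \<le> 2 * (S * (pi/4) * H)"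
    unfolding K using H0 by (intro enn2real_leI up) auto
qed

lemma Kint_between:
  assumes "0 < h" "A \<in> sets lborel" "0 \<le> \<alpha>" "\<alpha> < 2"
    and "{0<..<h} \<times> {0<..<h} \<subseteq> A" "A \<subseteq> {0..h} \<times> {0..h}"
  shows "pi/2 * (h powr (2-\<alpha>) / (2-\<alpha>)) \<le> Kint \<alpha> A"
    and "Kint \<alpha> A \<le> sqrt 2 powr (2-\<alpha>) * (pi/2) * (h powr (2-\<alpha>) / (2-\<alpha>))"
proof -
  obtain H where H: "H = h powr (2-\<alpha>) / (2-\<alpha>)" by simp
  obtain S where S: "S = sqrt 2 powr (2-\<alpha>)" by simp
  have "2 * (pi/4 * H) = pi/2 * H" "2 * (S * (pi/4) * H) = S * (pi/2) * H" by simp_all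
  with Kint_between0[OF assms H S] show "pi/2 * (h powr (2-\<alpha>) / (2-\<alpha>)) \<le> Kint \<alpha> A"
    and "Kint \<alpha> A \<le> sqrt 2 powr (2-\<alpha>) * (pi/2) * (h powr (2-\<alpha>) / (2-\<alpha>))"
    unfolding H S by metis+
qed

lemma K1:
  assumes "0 < h" "A \<in> sets lborel"
    and "{0<..<h} \<times> {0<..<h} \<subseteq> A" "A \<subseteq> {0..h} \<times> {0..h}"
  shows "((\<lambda>\<alpha>. c2 \<alpha> * Kint \<alpha> A) \<longlongrightarrow> 1) (at_left 2)"
proof (rule tendsto_sandwich)
  let ?l = "\<lambda>\<alpha>. g2 \<alpha> * (pi/2) * h powr (2-\<alpha>)"
  let ?u = "\<lambda>\<alpha>. sqrt 2 powr (2-\<alpha>) * (g2 \<alpha> * (pi/2) * h powr (2-\<alpha>))"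
  have ev: "eventually (\<lambda>\<alpha>. 1 < \<alpha> \<and> \<alpha> < 2) (at_left (2::real))"
    by (auto simp: eventually_at_left_field intro!: exI[of _ 1])
  show "eventually (\<lambda>\<alpha>. ?l \<alpha> \<le> c2 \<alpha> * Kint \<alpha> A) (at_left 2)"
    using ev
  proof eventually_elim
    case (elim \<alpha>)
    then have "c2 \<alpha> * (pi/2 * (h powr (2-\<alpha>) / (2-\<alpha>))) \<le> c2 \<alpha> * Kint \<alpha> A"
      using Kint_between(1)[OF assms(1,2) _ _ assms(3,4), of \<alpha>] c2_pos[of \<alpha>]
      by (intro mult_left_mono) auto
    moreover have "c2 \<alpha> * (pi/2 * (h powr (2-\<alpha>) / (2-\<alpha>))) = ?l \<alpha>"
    proof -
      have nz: "2 - \<alpha> \<noteq> 0" using elim by simp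
      show ?thesis by (subst c2_eq) (use elim nz in \<open>simp_all add: field_simps\<close>)
    qed
    ultimately show ?case by metis
  qed
  show "eventually (\<lambda>\<alpha>. c2 \<alpha> * Kint \<alpha> A \<le> ?u \<alpha>) (at_left 2)"
    using ev
  proof eventually_elim
    case (elim \<alpha>)
    then have "c2 \<alpha> * Kint \<alpha> A \<le> c2 \<alpha> * (sqrt 2 powr (2-\<alpha>) * (pi/2) * (h powr (2-\<alpha>) / (2-\<alpha>)))"
      using Kint_between(2)[OF assms(1,2) _ _ assms(3,4), of \<alpha>] c2_pos[of \<alpha>]
      by (intro mult_left_mono) auto
    moreover have "c2 \<alpha> * (sqrt 2 powr (2-\<alpha>) * (pi/2) * (h powr (2-\<alpha>) / (2-\<alpha>))) = ?u \<alpha>"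
    proof -
      have nz: "2 - \<alpha> \<noteq> 0" using elim by simp
      show ?thesis by (subst c2_eq) (use elim nz in \<open>simp_all add: field_simps\<close>)
    qed
    ultimately show ?case by metis
  qed
  have "(?l \<longlongrightarrow> 2/pi * (pi/2) * h powr (2-2)) (at_left 2)"
    using assms(1) by (intro tendsto_intros g2_lim) auto
  then show "(?l \<longlongrightarrow> 1) (at_left 2)" using assms(1) by simp
  have "(?u \<longlongrightarrow> sqrt 2 powr (2-2) * (2/pi * (pi/2) * h powr (2-2))) (at_left 2)"
    using assms(1) by (intro tendsto_intros g2_lim) auto
  then show "(?u \<longlongrightarrow> 1) (at_left 2)" using assms(1) by simp
qed



lemma box_borel: "{a..b::real} \<times> {c..d::real} \<in> sets borel"
  by (intro borel_closed closed_Times) auto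

lemma box_measure: "emeasure lborel ({0..L} \<times> {0..L::real}) = ennreal (L * L)" if "0 \<le> L"
proof -
  have "emeasure (lborel \<Otimes>\<^sub>M lborel) ({0..L} \<times> {0..L::real}) = emeasure lborel {0..L} * emeasure lborel {0..L::real}"
    by (intro lborel.emeasure_pair_measure_Times) auto
  then show ?thesis using that by (simp add: lborel_prod ennreal_mult)
qed

lemma NI_far:
  assumes "0 < h" "0 \<le> L" "A \<in> sets lborel" "A \<subseteq> {0..L} \<times> {0..L}" "\<And>\<xi>. \<xi> \<in> A \<Longrightarrow> h \<le> norm \<xi>" "0 \<le> \<alpha>"
  shows "NI \<alpha> A \<le> ennreal (h powr -\<alpha> * (L * L))"
proof -
  have "NI \<alpha> A \<le> (\<integral>\<^sup>+ \<xi>. ennreal (h powr -\<alpha>) * indicator ({0..L} \<times> {0..L}) \<xi> \<partial>lborel)"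
    unfolding NI_def
  proof (intro nn_integral_mono)
    fix \<xi> :: "real \<times> real"
    show "ennreal (norm \<xi> powr - \<alpha>) * indicator A \<xi> \<le> ennreal (h powr - \<alpha>) * indicator ({0..L} \<times> {0..L}) \<xi>"
    proof (cases "\<xi> \<in> A")
      case True
      then have "norm \<xi> powr -\<alpha> \<le> h powr -\<alpha>" using assms by (intro powr_mono2') auto
      moreover have "\<xi> \<in> {0..L} \<times> {0..L}" using True assms(4) by blast
      ultimately show ?thesis using True by simp
    qed simp
  qed
  also have "\<dots> = ennreal (h powr -\<alpha>) * emeasure lborel ({0..L} \<times> {0..L})"
    by (rule nn_integral_cmult_indicator) (simp add: box_borel)
  also have "\<dots> = ennreal (h powr -\<alpha> * (L * L))"
    using assms by (simp add: box_measure ennreal_mult)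
  finally show ?thesis .
qed

lemma Kint_far:
  assumes "0 < h" "0 \<le> L" "A \<in> sets lborel" "A \<subseteq> {0..L} \<times> {0..L}" "\<And>\<xi>. \<xi> \<in> A \<Longrightarrow> h \<le> norm \<xi>" "0 \<le> \<alpha>"
  shows "0 \<le> Kint \<alpha> A" "Kint \<alpha> A \<le> h powr -\<alpha> * (L * L)"
  using NI_far[OF assms] Kint_NI[OF assms(3)] assms by (auto intro!: enn2real_leI)

lemma K2:
  assumes "0 < h" "0 \<le> L" "A \<in> sets lborel" "A \<subseteq> {0..L} \<times> {0..L}" "\<And>\<xi>. \<xi> \<in> A \<Longrightarrow> h \<le> norm \<xi>"
  shows "((\<lambda>\<alpha>. c2 \<alpha> * Kint \<alpha> A) \<longlongrightarrow> 0) (at_left 2)"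
proof (rule tendsto_sandwich)
  have ev: "eventually (\<lambda>\<alpha>. 1 < \<alpha> \<and> \<alpha> < 2) (at_left (2::real))"
    by (auto simp: eventually_at_left_field intro!: exI[of _ 1])
  show "eventually (\<lambda>\<alpha>. 0 \<le> c2 \<alpha> * Kint \<alpha> A) (at_left 2)"
    using ev
  proof eventually_elim
    case (elim \<alpha>)
    then have "0 < c2 \<alpha>" by (intro c2_pos) auto
    moreover have "0 \<le> Kint \<alpha> A" using Kint_far(1)[OF assms] elim by auto
    ultimately show ?case by simp
  qed
  show "eventually (\<lambda>\<alpha>. c2 \<alpha> * Kint \<alpha> A \<le> c2 \<alpha> * (h powr -\<alpha> * (L * L))) (at_left 2)"
    using ev by eventually_elim (use Kint_far[OF assms] c2_pos in \<open>auto intro!: mult_left_mono\<close>)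
  have "((\<lambda>\<alpha>. c2 \<alpha> * (h powr -\<alpha> * (L * L))) \<longlongrightarrow> 0 * (h powr -2 * (L * L))) (at_left 2)"
    using assms(1) by (intro tendsto_intros c2_lim0) auto
  then show "((\<lambda>\<alpha>. c2 \<alpha> * (h powr -\<alpha> * (L * L))) \<longlongrightarrow> 0) (at_left 2)" by simp
qed simp

lemma NI_sqfin:
  assumes "0 < h" "A \<in> sets lborel" "A \<subseteq> {0..h} \<times> {0..h}" "0 \<le> \<alpha>" "\<alpha> < 2"
  shows "NI \<alpha> A < top"
proof -
  have "NI \<alpha> A \<le> NI \<alpha> ({0..h} \<times> {0..h})"
    unfolding NI_def using assms(3)
    by (intro nn_integral_mono) (auto split: split_indicator)
  also have "\<dots> = 2 * E \<alpha> h" using NI_sq assms by simp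
  also have "\<dots> < top" using E_bounds(2)[of h \<alpha>] assms
    by (simp add: ennreal_mult_less_top le_less_trans)
  finally show ?thesis .
qed

lemma K3:
  assumes "0 < h" "h \<le> L" "T \<in> sets lborel" "T \<subseteq> {0..L} \<times> {0..L}"
    and "{0<..<h} \<times> {0<..<h} \<subseteq> T"
  shows "((\<lambda>\<alpha>. c2 \<alpha> * Kint \<alpha> T) \<longlongrightarrow> 1) (at_left 2)"
proof -
  let ?I = "{0..h} \<times> {0..h::real}"
  have "?I \<in> sets borel" by (rule box_borel)
  then have mI: "?I \<in> sets lborel" by simp
  have m1: "T \<inter> ?I \<in> sets lborel" and m2: "T - ?I \<in> sets lborel" using assms(3) mI by auto
  have far: "h \<le> norm \<xi>" if "\<xi> \<in> T - ?I" for \<xi>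
  proof -
    obtain x y where xy: "\<xi> = (x,y)" by (cases \<xi>)
    with that assms(4) have "0 \<le> x" "0 \<le> y" "h < x \<or> h < y" by auto
    moreover have "x \<le> norm \<xi>" "y \<le> norm \<xi>" unfolding xy norm_Pair
      by (auto intro!: real_le_rsqrt)
    ultimately show ?thesis by auto
  qed
  have split: "Kint \<alpha> T = Kint \<alpha> (T \<inter> ?I) + Kint \<alpha> (T - ?I)" if "1 < \<alpha>" "\<alpha> < 2" for \<alpha>
  proof -
    have "NI \<alpha> T = NI \<alpha> (T \<inter> ?I) + NI \<alpha> (T - ?I)"
      unfolding NI_def using m1 m2
      by (subst nn_integral_add[symmetric]) (auto intro!: nn_integral_cong split: split_indicator)
    moreover have "NI \<alpha> (T \<inter> ?I) < top" using NI_sqfin[OF assms(1) m1] that by auto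
    moreover have "NI \<alpha> (T - ?I) < top"
    proof -
      have "NI \<alpha> (T - ?I) \<le> ennreal (h powr -\<alpha> * (L * L))"
        using assms that by (intro NI_far[OF assms(1) _ m2 _ far]) auto
      then show ?thesis using le_less_trans by fastforce
    qed
    ultimately show ?thesis
      using Kint_NI[OF assms(3)] Kint_NI[OF m1] Kint_NI[OF m2] by (simp add: enn2real_plus)
  qed
  have "((\<lambda>\<alpha>. c2 \<alpha> * Kint \<alpha> (T \<inter> ?I) + c2 \<alpha> * Kint \<alpha> (T - ?I)) \<longlongrightarrow> 1 + 0) (at_left 2)"
  proof (intro tendsto_add)
    show "((\<lambda>\<alpha>. c2 \<alpha> * Kint \<alpha> (T \<inter> ?I)) \<longlongrightarrow> 1) (at_left 2)"
      using assms by (intro K1 m1) auto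
    show "((\<lambda>\<alpha>. c2 \<alpha> * Kint \<alpha> (T - ?I)) \<longlongrightarrow> 0) (at_left 2)"
      using assms by (intro K2[OF assms(1) _ m2 _ far, where L=L]) auto
  qed
  moreover have "eventually (\<lambda>\<alpha>. c2 \<alpha> * Kint \<alpha> (T \<inter> ?I) + c2 \<alpha> * Kint \<alpha> (T - ?I) = c2 \<alpha> * Kint \<alpha> T) (at_left 2)"
    by (auto simp: eventually_at_left_field split distrib_left intro!: exI[of _ 1])
  ultimately show ?thesis using Lim_transform_eventually by fastforce
qed



lemma tail_pw:
  fixes x y L \<alpha> s :: real
  assumes "0 < x" "0 < y" "L \<le> x \<or> L \<le> y" "0 < L" "1 \<le> \<alpha>" "\<alpha> \<le> 2" "s = max 1 (1/L)"
  shows "norm (x,y) powr -(2+\<alpha>) \<le> (1+s) powr 4 * ((1+x) powr (-3/2) * (1+y) powr (-3/2))"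
proof -
  define r where "r = norm (x,y)"
  have rx: "x \<le> r" "y \<le> r" unfolding r_def norm_Pair by (auto intro!: real_le_rsqrt)
  have rL: "L \<le> r" using assms rx by auto
  have s1: "1 \<le> s" "1/L \<le> s" using assms by auto
  have sr: "1 \<le> s * r"
  proof -
    have "1 = (1/L) * L" using assms by simp
    also have "\<dots> \<le> s * r" using s1 rL assms by (intro mult_mono) auto
    finally show ?thesis .
  qed
  define R where "R = (1+s) * r"
  have Rx: "1 + x \<le> R" "1 + y \<le> R" unfolding R_def using sr rx by (auto simp: algebra_simps)
  have R1: "1 \<le> R" using Rx assms by simp
  have r0: "0 < r" using rx assms by simp
  have "R powr -(2+\<alpha>) = (1+s) powr -(2+\<alpha>) * r powr -(2+\<alpha>)"
    unfolding R_def using r0 s1 by (simp add: powr_mult)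
  moreover have "(1+s) powr (2+\<alpha>) * (1+s) powr -(2+\<alpha>) = 1"
    using s1 by (simp add: powr_add[symmetric])
  ultimately have "r powr -(2+\<alpha>) = (1+s) powr (2+\<alpha>) * R powr -(2+\<alpha>)"
    by (metis mult.assoc mult_1)
  also have "\<dots> \<le> (1+s) powr 4 * R powr -3"
  proof (intro mult_mono)
    show "(1+s) powr (2+\<alpha>) \<le> (1+s) powr 4" using s1 assms by (intro powr_mono) auto
    show "R powr -(2+\<alpha>) \<le> R powr -3" using R1 assms by (intro powr_mono) auto
  qed auto
  also have "R powr -3 = R powr (-3/2) * R powr (-3/2)" by (simp add: powr_add[symmetric])
  also have "\<dots> \<le> (1+x) powr (-3/2) * (1+y) powr (-3/2)"
    using Rx assms by (intro mult_mono powr_mono2') auto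
  finally show ?thesis unfolding r_def using s1 by (simp add: mult_left_mono)
qed

lemma k_int: "(\<integral>\<^sup>+ t. ennreal ((1+t) powr (-3/2)) * indicator {0..} t \<partial>lborel) \<le> 3"
proof -
  have "(\<integral>\<^sup>+ t. ennreal ((1+t) powr (-3/2)) * indicator {0..} t \<partial>lborel)
     \<le> (\<integral>\<^sup>+ t. indicator {0..1} t + ennreal (t powr (-3/2)) * indicator {1..} t \<partial>lborel)"
  proof (intro nn_integral_mono)
    fix t :: real
    show "ennreal ((1+t) powr (-3/2)) * indicator {0..} t \<le> indicator {0..1} t + ennreal (t powr (-3/2)) * indicator {1..} t"
    proof (cases "0 \<le> t")
      case True
      show ?thesis
      proof (cases "t \<le> 1")
        case True2: True
        have "(1+t) powr (-3/2) \<le> (1+t) powr 0" using True by (intro powr_mono) auto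
        then have "(1+t) powr (-3/2) \<le> 1" using True by simp
        then have "ennreal ((1+t) powr (-3/2)) * indicator {0..} t \<le> 1"
          using True by (simp add: ennreal_leI)
        moreover have "(1::ennreal) \<le> indicator {0..1} t + ennreal (t powr (-3/2)) * indicator {1..} t"
          using True True2 by (simp add: indicator_def)
        ultimately show ?thesis by (rule order.trans)
      next
        case False
        have "(1+t) powr (-3/2) \<le> t powr (-3/2)" using False by (intro powr_mono2') auto
        then show ?thesis using True False by (auto simp: indicator_def)
      qed
    qed simp
  qed
  also have "\<dots> = (\<integral>\<^sup>+ t. indicator {0..1::real} t \<partial>lborel) + (\<integral>\<^sup>+ t. ennreal (t powr (-3/2)) * indicator {1..} t \<partial>lborel)"
    by (rule nn_integral_add) auto
  also have "(\<integral>\<^sup>+ t. indicator {0..1::real} t \<partial>lborel) = 1" by simp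
  also have "(\<integral>\<^sup>+ t. ennreal (t powr (-3/2)) * indicator {1..} t \<partial>lborel) = ennreal 2"
  proof -
    have "((\<lambda>t::real. t powr (-3/2)) has_integral -(1 powr (-3/2+1)) / (-3/2+1)) {1..}"
      by (intro has_integral_powr_to_inf) auto
    then have "((\<lambda>t::real. t powr (-3/2)) has_integral 2) {1..}" by simp
    from nn_integral_has_integral_lebesgue'[OF _ this] show ?thesis by simp
  qed
  finally show ?thesis by simp
qed



lemma D2_meas[measurable]: "D2 L \<in> sets borel"
  unfolding D2_def D1_def
  by (intro sets.Diff borel_closed borel_open closed_Times open_Times) auto

lemma NI_D2:
  assumes "0 < L" "1 \<le> \<alpha>" "\<alpha> \<le> 2"
  shows "NI (2+\<alpha>) (D2 L) \<le> ennreal ((1 + max 1 (1/L)) powr 4) * 3 * 3"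
proof -
  define C where "C = (1 + max 1 (1/L)) powr 4"
  define k where "k = (\<lambda>t::real. ennreal ((1+t) powr (-3/2)) * indicator {0..} t)"
  have [measurable]: "k \<in> borel_measurable borel" unfolding k_def by measurable
  have K: "integral\<^sup>N lborel k \<le> 3" unfolding k_def by (rule k_int)
  have "NI (2+\<alpha>) (D2 L) = (\<integral>\<^sup>+ x. \<integral>\<^sup>+ y. ennreal (norm (x,y) powr -(2+\<alpha>)) * indicator (D2 L) (x,y) \<partial>lborel \<partial>lborel)"
    unfolding NI_def by (rule tonelli1) measurable
  also have "\<dots> \<le> (\<integral>\<^sup>+ x. \<integral>\<^sup>+ y. ennreal C * k x * k y \<partial>lborel \<partial>lborel)"
  proof (rule nn_integral_mono_AE)
    show "AE x in lborel. (\<integral>\<^sup>+ y. ennreal (norm (x,y) powr -(2+\<alpha>)) * indicator (D2 L) (x,y) \<partial>lborel)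
       \<le> (\<integral>\<^sup>+ y. ennreal C * k x * k y \<partial>lborel)"
      using AE_lborel_singleton[of 0]
    proof eventually_elim
      case (elim x)
      show ?case
      proof (rule nn_integral_mono_AE)
        show "AE y in lborel. ennreal (norm (x,y) powr -(2+\<alpha>)) * indicator (D2 L) (x,y) \<le> ennreal C * k x * k y"
          using AE_lborel_singleton[of 0]
        proof eventually_elim
          case (elim y)
          show ?case
          proof (cases "(x,y) \<in> D2 L")
            case True
            then have "0 < x" "0 < y" "L \<le> x \<or> L \<le> y"
              using \<open>x \<noteq> 0\<close> \<open>y \<noteq> 0\<close> unfolding D2_def D1_def by auto
            from tail_pw[OF this assms(1,2,3) refl]
            have "norm (x,y) powr -(2+\<alpha>) \<le> C * ((1+x) powr (-3/2) * (1+y) powr (-3/2))"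
              unfolding C_def .
            then have "ennreal (norm (x,y) powr -(2+\<alpha>)) \<le> ennreal (C * ((1+x) powr (-3/2) * (1+y) powr (-3/2)))"
              by (rule ennreal_leI)
            also have "\<dots> = ennreal C * k x * k y"
              unfolding k_def using \<open>0 < x\<close> \<open>0 < y\<close>
              by (simp add: ennreal_mult C_def mult.assoc)
            finally show ?thesis using True by simp
          qed simp
        qed
      qed
    qed
  qed
  also have "\<dots> = (\<integral>\<^sup>+ x. ennreal C * k x * integral\<^sup>N lborel k \<partial>lborel)"
    by (intro nn_integral_cong nn_integral_cmult) measurable
  also have "\<dots> = (\<integral>\<^sup>+ x. ennreal C * k x \<partial>lborel) * integral\<^sup>N lborel k"
    by (rule nn_integral_multc) measurable
  also have "\<dots> = ennreal C * integral\<^sup>N lborel k * integral\<^sup>N lborel k"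
    by (subst nn_integral_cmult) auto
  also have "\<dots> \<le> ennreal C * 3 * 3"
    using K by (intro mult_mono) auto
  finally show ?thesis unfolding C_def .
qed

lemma K4:
  assumes "0 < L"
  shows "((\<lambda>\<alpha>. c2 \<alpha> * (LINT \<xi>:D2 L|lborel. norm \<xi> powr (-(2 + \<alpha>)))) \<longlongrightarrow> 0) (at_left 2)"
proof (rule tendsto_sandwich)
  define B where "B = (1 + max 1 (1/L)) powr 4 * 3 * 3"
  define C where "C = (1 + max 1 (1/L)) powr 4"
  have C0: "0 \<le> C" unfolding C_def by simp
  have eB: "ennreal B = ennreal C * 3 * 3"
  proof -
    have "ennreal (C*3*3) = ennreal (C*3) * ennreal 3" by (rule ennreal_mult) (auto simp: C0)
    also have "ennreal (C*3) = ennreal C * ennreal 3" by (rule ennreal_mult) (auto simp: C0)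
    finally show ?thesis unfolding B_def C_def by simp
  qed
  have B: "NI (2+\<alpha>) (D2 L) \<le> ennreal B" if "1 \<le> \<alpha>" "\<alpha> \<le> 2" for \<alpha>
    using NI_D2[OF assms that] unfolding eB C_def .
  have B0: "0 \<le> B" unfolding B_def by simp
  have eqK: "(LINT \<xi>:D2 L|lborel. norm \<xi> powr (-(2 + \<alpha>))) = Kint (2+\<alpha>) (D2 L)" for \<alpha>
    unfolding Kint_def ..
  have ev: "eventually (\<lambda>\<alpha>. 1 < \<alpha> \<and> \<alpha> < 2) (at_left (2::real))"
    by (auto simp: eventually_at_left_field intro!: exI[of _ 1])
  have bnd: "0 \<le> Kint (2+\<alpha>) (D2 L) \<and> Kint (2+\<alpha>) (D2 L) \<le> B" if "1 < \<alpha>" "\<alpha> < 2" for \<alpha>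
    using Kint_NI[of "D2 L" "2+\<alpha>"] B[of \<alpha>] that B0 by (auto intro!: enn2real_leI)
  show "eventually (\<lambda>\<alpha>. 0 \<le> c2 \<alpha> * (LINT \<xi>:D2 L|lborel. norm \<xi> powr (-(2 + \<alpha>)))) (at_left 2)"
    using ev
  proof eventually_elim
    case (elim \<alpha>)
    then have "0 < c2 \<alpha>" by (intro c2_pos) auto
    then show ?case using bnd[of \<alpha>] elim unfolding eqK by simp
  qed
  show "eventually (\<lambda>\<alpha>. c2 \<alpha> * (LINT \<xi>:D2 L|lborel. norm \<xi> powr (-(2 + \<alpha>))) \<le> c2 \<alpha> * B) (at_left 2)"
    using ev
  proof eventually_elim
    case (elim \<alpha>)
    then have "0 < c2 \<alpha>" by (intro c2_pos) auto
    then show ?case using bnd[of \<alpha>] elim unfolding eqK by (intro mult_left_mono) auto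
  qed
  have "((\<lambda>\<alpha>. c2 \<alpha> * B) \<longlongrightarrow> 0 * B) (at_left 2)" by (intro tendsto_intros c2_lim0)
  then show "((\<lambda>\<alpha>. c2 \<alpha> * B) \<longlongrightarrow> 0) (at_left 2)" by simp
qed simp



lemma cell00: "cell h 0 0 = {0..h} \<times> {0..h}"
  by (simp add: cell_def)

lemma cell_borel: "cell h i j \<in> sets borel"
  unfolding cell_def by (auto intro!: box_borel)

lemma D1_borel: "D1 L \<in> sets borel"
  unfolding D1_def by (intro borel_open open_Times) auto

lemma Tcell_borel: "Tcell L h m n \<in> sets lborel"
  unfolding Tcell_def using cell_borel D1_borel by auto

lemma Tcell_sub: "Tcell L h m n \<subseteq> {0..L} \<times> {0..L}"
  unfolding Tcell_def D1_def by auto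

lemma cell_far:
  assumes "0 < h" "1 \<le> i \<or> 1 \<le> j" "\<xi> \<in> cell h i j"
  shows "h \<le> norm \<xi>"
proof -
  obtain x y where xy: "\<xi> = (x,y)" by (cases \<xi>)
  have ij: "0 \<le> i" "0 \<le> j" using assms(3) unfolding cell_def by (auto split: if_splits)
  then have "of_int i * h \<le> x" "of_int j * h \<le> y" using assms(3) unfolding cell_def xy by auto
  moreover have "0 \<le> of_int i * h" "0 \<le> of_int j * h" using ij assms(1) by auto
  moreover have "h \<le> of_int i * h \<or> h \<le> of_int j * h" using assms(1,2) by auto
  moreover have "\<bar>x\<bar> \<le> norm \<xi>" "\<bar>y\<bar> \<le> norm \<xi>" unfolding xy norm_Pair
    by (auto intro!: real_le_rsqrt)
  ultimately show ?thesis by auto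
qed

lemma Tcell_far:
  assumes "0 < h" "1 < m + n" "(m, n) \<noteq> (1, 1)" "\<xi> \<in> Tcell L h m n"
  shows "h \<le> norm \<xi>"
proof -
  have "2 \<le> m \<or> 2 \<le> n" using assms(2,3) by auto
  then show ?thesis using assms(4) unfolding Tcell_def
    by (auto elim!: cell_far[OF assms(1), rotated])
qed

lemma Tcell_near:
  assumes "0 < h" "h \<le> L" "(m, n) = (1,0) \<or> (m, n) = (0,1) \<or> (m, n) = (1,1)"
  shows "{0<..<h} \<times> {0<..<h} \<subseteq> Tcell L h m n"
proof -
  have "{0<..<h} \<times> {0<..<h} \<subseteq> cell h 0 0 \<inter> D1 L"
    using assms unfolding cell00 D1_def by auto
  then show ?thesis using assms(3) unfolding Tcell_def by auto
qed



lemma coef_lim: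
  assumes "0 < L" "0 < N" "0 < m + n"
  defines "h \<equiv> L / real N"
  shows "((\<lambda>\<alpha>. c2 \<alpha> * acoef \<alpha> L N m n) \<longlongrightarrow>
           (if (m,n) = (1,0) \<or> (m,n) = (0,1) then 1 / h\<^sup>2 else 0)) (at_left 2)"
proof -
  have h0: "0 < h" using assms by (simp add: h_def)
  have hL: "h \<le> L" using assms by (simp add: h_def field_simps)
  define CC where "CC = 2 ^ sigma_zeros m n / (4 * ((real m * h)\<^sup>2 + (real n * h)\<^sup>2))"
  have eq: "c2 \<alpha> * acoef \<alpha> L N m n = CC * (c2 \<alpha> * Kint \<alpha> (Tcell L h m n) + cbar m n * (c2 \<alpha> * Kint \<alpha> (cell h 0 0)))" for \<alpha>
    unfolding acoef_def Let_def h_def[symmetric] CC_def by (simp add: algebra_simps)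
  have KI: "((\<lambda>\<alpha>. c2 \<alpha> * Kint \<alpha> (cell h 0 0)) \<longlongrightarrow> 1) (at_left 2)"
    unfolding cell00 using h0 by (intro K1) (auto simp: box_borel)
  obtain lT where lT: "((\<lambda>\<alpha>. c2 \<alpha> * Kint \<alpha> (Tcell L h m n)) \<longlongrightarrow> lT) (at_left 2)"
    and lTv: "lT = (if (m,n) = (1,0) \<or> (m,n) = (0,1) \<or> (m,n) = (1,1) then 1 else 0)"
  proof (cases "(m,n) = (1,0) \<or> (m,n) = (0,1) \<or> (m,n) = (1,1)")
    case True
    have "((\<lambda>\<alpha>. c2 \<alpha> * Kint \<alpha> (Tcell L h m n)) \<longlongrightarrow> 1) (at_left 2)"
      by (rule K3[OF h0 hL Tcell_borel Tcell_sub Tcell_near[OF h0 hL True]])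
    then show ?thesis using that True by simp
  next
    case False
    then have "1 < m + n" "(m,n) \<noteq> (1,1)" using assms(3) by auto
    have "((\<lambda>\<alpha>. c2 \<alpha> * Kint \<alpha> (Tcell L h m n)) \<longlongrightarrow> 0) (at_left 2)"
      using assms(1) by (intro K2[OF h0 _ Tcell_borel Tcell_sub Tcell_far[OF h0 \<open>1 < m + n\<close> \<open>(m,n) \<noteq> (1,1)\<close>]]) auto
    moreover have "(if (m,n) = (1,0) \<or> (m,n) = (0,1) \<or> (m,n) = (1,1) then 1 else 0) = (0::real)"
      using False by auto
    ultimately show ?thesis using that by metis
  qed
  have "((\<lambda>\<alpha>. CC * (c2 \<alpha> * Kint \<alpha> (Tcell L h m n) + cbar m n * (c2 \<alpha> * Kint \<alpha> (cell h 0 0))))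
      \<longlongrightarrow> CC * (lT + cbar m n * 1)) (at_left 2)"
    by (intro tendsto_intros lT KI)
  moreover have "CC * (lT + cbar m n * 1) = (if (m,n) = (1,0) \<or> (m,n) = (0,1) then 1 / h\<^sup>2 else 0)"
  proof (cases "(m,n) = (1,0) \<or> (m,n) = (0,1)")
    case True
    then show ?thesis unfolding lTv CC_def using h0
      by (auto simp: sigma_zeros_def cbar_def field_simps power2_eq_square)
  next
    case False
    then show ?thesis unfolding lTv CC_def by (auto simp: cbar_def)
  qed
  ultimately show ?thesis unfolding eq by simp
qed



definition lim1 :: "real \<Rightarrow> nat \<Rightarrow> nat \<Rightarrow> real" where
  "lim1 h m n = (if (m,n) = (1,0) \<or> (m,n) = (0,1) then 1 / h\<^sup>2 else 0)"

definition ell :: "real \<Rightarrow> nat \<Rightarrow> nat \<Rightarrow> real" where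
  "ell h m n = (if m = 0 \<and> n = 0 then - 4 / h\<^sup>2 else lim1 h m n)"

lemma five_point:
  fixes u :: "int \<Rightarrow> int \<Rightarrow> real" and G :: "(int \<times> int) set"
  assumes fin: "finite G" and ij: "(i, j) \<in> G" and u0: "\<forall>p q. (p, q) \<notin> G \<longrightarrow> u p q = 0"
  shows "(\<Sum>x\<in>G. - ell h (nat \<bar>fst x - i\<bar>) (nat \<bar>snd x - j\<bar>) * u (fst x) (snd x))
       = (4 * u i j - u (i + 1) j - u (i - 1) j - u i (j + 1) - u i (j - 1)) / h\<^sup>2"
proof -
  define F where "F = (\<lambda>x::int\<times>int. - ell h (nat \<bar>fst x - i\<bar>) (nat \<bar>snd x - j\<bar>) * u (fst x) (snd x))"
  define P where "P = {(i,j), (i+1,j), (i-1,j), (i,j+1), (i,j-1)}"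
  have finP: "finite P" unfolding P_def by simp
  have "sum F G = sum F (G \<union> P)"
  proof (rule sum.mono_neutral_left)
    show "\<forall>x\<in>G \<union> P - G. F x = 0" using u0 unfolding F_def by auto
  qed (use fin finP in auto)
  also have "\<dots> = sum F P"
  proof (rule sum.mono_neutral_right)
    show "\<forall>x\<in>G \<union> P - P. F x = 0"
    proof
      fix x assume x: "x \<in> G \<union> P - P"
      obtain p q where pq: "x = (p,q)" by (cases x)
      have "ell h (nat \<bar>p - i\<bar>) (nat \<bar>q - j\<bar>) = 0"
        using x unfolding pq P_def ell_def lim1_def by (auto split: if_splits)
      then show "F x = 0" unfolding F_def pq by simp
    qed
  qed (use fin finP in auto)
  also have "sum F P = (4 * u i j - u (i + 1) j - u (i - 1) j - u i (j + 1) - u i (j - 1)) / h\<^sup>2"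
    unfolding P_def F_def ell_def lim1_def by (simp add: diff_divide_distrib add_divide_distrib algebra_simps)
  finally show ?thesis unfolding F_def .
qed

lemma coef_lim':
  assumes "0 < L" "0 < N" "0 < m + n"
  shows "((\<lambda>\<alpha>. c2 \<alpha> * acoef \<alpha> L N m n) \<longlongrightarrow> lim1 (L / real N) m n) (at_left 2)"
  using coef_lim[OF assms] unfolding lim1_def .

lemma a00_lim:
  assumes "0 < L" "0 < N"
  shows "((\<lambda>\<alpha>. c2 \<alpha> * a00 \<alpha> L N) \<longlongrightarrow> - 4 / (L / real N)\<^sup>2) (at_left 2)"
proof -
  define h where "h = L / real N"
  have eq: "c2 \<alpha> * a00 \<alpha> L N = - 2 * (\<Sum>m=1..N. c2 \<alpha> * acoef \<alpha> L N m 0 + c2 \<alpha> * acoef \<alpha> L N 0 m)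
     - 4 * (\<Sum>m=1..N. \<Sum>n=1..N. c2 \<alpha> * acoef \<alpha> L N m n)
     - 4 * (c2 \<alpha> * (LINT \<xi>:D2 L|lborel. norm \<xi> powr (-(2 + \<alpha>))))" for \<alpha>
    unfolding a00_def by (simp add: algebra_simps sum_distrib_left)
  have "((\<lambda>\<alpha>. - 2 * (\<Sum>m=1..N. c2 \<alpha> * acoef \<alpha> L N m 0 + c2 \<alpha> * acoef \<alpha> L N 0 m)
     - 4 * (\<Sum>m=1..N. \<Sum>n=1..N. c2 \<alpha> * acoef \<alpha> L N m n)
     - 4 * (c2 \<alpha> * (LINT \<xi>:D2 L|lborel. norm \<xi> powr (-(2 + \<alpha>)))))
     \<longlongrightarrow> - 2 * (\<Sum>m=1..N. lim1 h m 0 + lim1 h 0 m) - 4 * (\<Sum>m=1..N. \<Sum>n=1..N. lim1 h m n) - 4 * 0) (at_left 2)"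
    unfolding h_def
    by (intro tendsto_intros K4 assms coef_lim') auto
  moreover have "(\<Sum>m=1..N. lim1 h m 0 + lim1 h 0 m) = 2 / h\<^sup>2"
  proof -
    have "(\<Sum>m=1..N. lim1 h m 0 + lim1 h 0 m) = (\<Sum>m\<in>{1..N}. if m = 1 then 2 / h\<^sup>2 else 0)"
      by (intro sum.cong) (auto simp: lim1_def)
    also have "\<dots> = 2 / h\<^sup>2" using assms by simp
    finally show ?thesis .
  qed
  moreover have "(\<Sum>m=1..N. \<Sum>n=1..N. lim1 h m n) = 0"
    by (intro sum.neutral ballI) (auto simp: lim1_def)
  ultimately show ?thesis unfolding eq h_def by simp
qed

lemma coeff_lim:
  assumes "0 < L" "0 < N"
  shows "((\<lambda>\<alpha>. c2 \<alpha> * acoeff \<alpha> L N m n) \<longlongrightarrow> ell (L / real N) m n) (at_left 2)"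
proof (cases "m = 0 \<and> n = 0")
  case True
  then show ?thesis unfolding acoeff_def ell_def using a00_lim[OF assms] by simp
next
  case False
  then have "0 < m + n" by auto
  have "(\<lambda>\<alpha>. c2 \<alpha> * acoeff \<alpha> L N m n) = (\<lambda>\<alpha>. c2 \<alpha> * acoef \<alpha> L N m n)"
    using False by (auto simp: acoeff_def)
  moreover have "ell (L / real N) m n = lim1 (L / real N) m n" using False by (auto simp: ell_def)
  ultimately show ?thesis using coef_lim'[OF assms \<open>0 < m + n\<close>] by simp
qed

theorem mainTheorem8:
  fixes L :: real and N :: nat
  assumes "L > 0" and "N > 0"
  defines "h \<equiv> L / real N"
  shows "((\<lambda>\<alpha>. c2 \<alpha> * acoef \<alpha> L N 1 0) \<longlongrightarrow> 1 / h\<^sup>2) (at_left 2) \<and>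
         ((\<lambda>\<alpha>. c2 \<alpha> * acoef \<alpha> L N 0 1) \<longlongrightarrow> 1 / h\<^sup>2) (at_left 2) \<and>
         (\<forall>m n :: nat. m + n > 1 \<longrightarrow> ((\<lambda>\<alpha>. c2 \<alpha> * acoef \<alpha> L N m n) \<longlongrightarrow> 0) (at_left 2)) \<and>
         ((\<lambda>\<alpha>. c2 \<alpha> * a00 \<alpha> L N) \<longlongrightarrow> - 4 / h\<^sup>2) (at_left 2) \<and>
         ((\<lambda>\<alpha>. c2 \<alpha> * Kint \<alpha> (cell h 0 0)) \<longlongrightarrow> 1) (at_left 2) \<and>
         (c2 \<longlongrightarrow> 0) (at_left 2) \<and>
         (\<forall>(u :: int \<Rightarrow> int \<Rightarrow> real) i j. (i, j) \<in> grid_interior N \<longrightarrow> (\<forall>p q. (p, q) \<notin> grid_interior N \<longrightarrow> u p q = 0) \<longrightarrow>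
           ((\<lambda>\<alpha>. scheme \<alpha> L N u i j) \<longlongrightarrow>
              (4 * u i j - u (i + 1) j - u (i - 1) j - u i (j + 1) - u i (j - 1)) / h\<^sup>2) (at_left 2))"
proof (intro conjI allI impI)
  have h0: "0 < h" using assms by (simp add: h_def)
  show "((\<lambda>\<alpha>. c2 \<alpha> * acoef \<alpha> L N 1 0) \<longlongrightarrow> 1 / h\<^sup>2) (at_left 2)"
    using coef_lim'[OF assms(1,2), of 1 0] unfolding h_def lim1_def by simp
  show "((\<lambda>\<alpha>. c2 \<alpha> * acoef \<alpha> L N 0 1) \<longlongrightarrow> 1 / h\<^sup>2) (at_left 2)"
    using coef_lim'[OF assms(1,2), of 0 1] unfolding h_def lim1_def by simp
  show "((\<lambda>\<alpha>. c2 \<alpha> * acoef \<alpha> L N m n) \<longlongrightarrow> 0) (at_left 2)" if "m + n > 1" for m n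
  proof -
    have "lim1 (L / real N) m n = 0" using that by (auto simp: lim1_def)
    moreover have "0 < m + n" using that by arith
    ultimately show ?thesis using coef_lim'[OF assms(1,2) \<open>0 < m + n\<close>] by simp
  qed
  show "((\<lambda>\<alpha>. c2 \<alpha> * a00 \<alpha> L N) \<longlongrightarrow> - 4 / h\<^sup>2) (at_left 2)"
    using a00_lim[OF assms(1,2)] unfolding h_def .
  show "((\<lambda>\<alpha>. c2 \<alpha> * Kint \<alpha> (cell h 0 0)) \<longlongrightarrow> 1) (at_left 2)"
    unfolding cell00 using h0 by (intro K1) (auto simp: box_borel)
  show "(c2 \<longlongrightarrow> 0) (at_left 2)" by (rule c2_lim0)
  fix u :: "int \<Rightarrow> int \<Rightarrow> real" and i j
  assume ij: "(i, j) \<in> grid_interior N" and u0: "\<forall>p q. (p, q) \<notin> grid_interior N \<longrightarrow> u p q = 0"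
  have fin: "finite (grid_interior N)" unfolding grid_interior_def by simp
  have eq: "scheme \<alpha> L N u i j = (\<Sum>x\<in>grid_interior N. - (c2 \<alpha> * acoeff \<alpha> L N (nat \<bar>fst x - i\<bar>) (nat \<bar>snd x - j\<bar>)) * u (fst x) (snd x))" for \<alpha>
    unfolding scheme_def sum_distrib_left split_def by (simp add: algebra_simps)
  have "((\<lambda>\<alpha>. \<Sum>x\<in>grid_interior N. - (c2 \<alpha> * acoeff \<alpha> L N (nat \<bar>fst x - i\<bar>) (nat \<bar>snd x - j\<bar>)) * u (fst x) (snd x))
     \<longlongrightarrow> (\<Sum>x\<in>grid_interior N. - ell h (nat \<bar>fst x - i\<bar>) (nat \<bar>snd x - j\<bar>) * u (fst x) (snd x))) (at_left 2)"
    unfolding h_def by (intro tendsto_intros coeff_lim assms)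
  then show "((\<lambda>\<alpha>. scheme \<alpha> L N u i j) \<longlongrightarrow>
              (4 * u i j - u (i + 1) j - u (i - 1) j - u i (j + 1) - u i (j - 1)) / h\<^sup>2) (at_left 2)"
    unfolding eq five_point[OF fin ij u0] .
qed


end
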